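(* Let $\ell \ge 1$, $L = 2^\ell$, and let $s$ be an integer with $0 \le s < \ell$. Let $a \in \mathbb{Z}_L$ and let $\langle a\rangle_0, \langle a\rangle_1 \in \mathbb{Z}_L$ satisfy $\langle a\rangle_0 + \langle a\rangle_1 = a$ in $\mathbb{Z}_L$. Let $a_u, a_0, a_1 \in \{0,1,\ldots,2^\ell-1\}$ be the unsigned representatives of $a, \langle a\rangle_0, \langle a\rangle_1$, and write $a_0 = a_0^1\cdot 2^s + a_0^0$, $a_1 = a_1^1 \cdot 2^s + a_1^0$ with $a_0^1,a_0^0,a_1^1,a_1^0\in\mathbb{Z}$ and $0 \le a_0^0, a_1^0 < 2^s$. With $n' = 2^{\ell-1}$, define $$\mathsf{corr} = \begin{cases} -1 & \text{if } (a_u \ge n') \wedge (a_0 < n') \wedge (a_1 < n'),\\ 1 & \text{if } (a_u < n') \wedge (a_0 \ge n') \wedge (a_1 \ge n'),\\ 0 & \text{otherwise.}\end{cases}$$ Then $$(\langle a\rangle_0 \gg s) + (\langle a\rangle_1 \gg s) + \mathsf{corr}\cdot 2^{\ell-s} + \mathbf{1}\{a_0^0 + a_1^0 \ge 2^s\} \equiv (a \gg s) \pmod{L}.$$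
   Context: $\mathbf{1}\{P\}$ is the indicator of $P$. For $x \in \mathbb{Z}_L$ with unsigned representative $x_u \in\{0,\ldots,2^\ell-1\}$, $x \gg s$ denotes the arithmetic right shift by $s$, i.e. $\lfloor (x_u - \mathbf{1}\{x_u \ge 2^{\ell-1}\}\cdot 2^\ell)/2^s \rfloor \bmod 2^\ell$ (floor division of the two's-complement signed value of $x$ by $2^s$, reduced mod $2^\ell$). The sum in the conclusion is taken in $\mathbb{Z}_L$. *)

theory Defs
  imports "HOL-Number_Theory.Cong"
begin

text \<open>Elements of Z_L (L = 2^l) are represented by integers; equality in Z_L is
  congruence modulo 2^l.\<close>

definition urep :: "nat \<Rightarrow> int \<Rightarrow> int" where
  "urep l x = x mod 2 ^ l"

text \<open>Arithmetic right shift by s on l-bit two's complement: floor division of the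
  signed value by 2^s, reduced mod 2^l.\<close>
definition ashr :: "nat \<Rightarrow> nat \<Rightarrow> int \<Rightarrow> int" where
  "ashr l s x = ((urep l x - (if urep l x \<ge> 2 ^ (l - 1) then 2 ^ l else 0)) div 2 ^ s) mod 2 ^ l"

definition corr :: "nat \<Rightarrow> int \<Rightarrow> int \<Rightarrow> int \<Rightarrow> int" where
  "corr l au a0 a1 =
     (if au \<ge> 2 ^ (l - 1) \<and> a0 < 2 ^ (l - 1) \<and> a1 < 2 ^ (l - 1) then -1
      else if au < 2 ^ (l - 1) \<and> a0 \<ge> 2 ^ (l - 1) \<and> a1 \<ge> 2 ^ (l - 1) then 1
      else 0)"

end

theory Submission
  imports Defs
begin

theorem corollary4p2:
  fixes l s :: nat and a x0 x1 a01 a00 a11 a10 :: int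
  assumes "l \<ge> 1" and "s < l"
    and "[x0 + x1 = a] (mod 2 ^ l)"
    and "urep l x0 = a01 * 2 ^ s + a00" and "0 \<le> a00" and "a00 < 2 ^ s"
    and "urep l x1 = a11 * 2 ^ s + a10" and "0 \<le> a10" and "a10 < 2 ^ s"
  shows "[ashr l s x0 + ashr l s x1
            + corr l (urep l a) (urep l x0) (urep l x1) * 2 ^ (l - s)
            + (if a00 + a10 \<ge> 2 ^ s then 1 else 0)
          = ashr l s a] (mod 2 ^ l)"
proof -
  define N :: int where "N = 2 ^ l"
  define H :: int where "H = 2 ^ (l - 1)"
  define S :: int where "S = 2 ^ s"
  define K :: int where "K = 2 ^ (l - s)"
  define u0 where "u0 = urep l x0"
  define u1 where "u1 = urep l x1"
  define ua where "ua = urep l a"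
  define b0 :: int where "b0 = (if u0 \<ge> H then 1 else 0)"
  define b1 :: int where "b1 = (if u1 \<ge> H then 1 else 0)"
  define ba :: int where "ba = (if ua \<ge> H then 1 else 0)"
  define c :: int where "c = (if a00 + a10 \<ge> 2 ^ s then 1 else 0)"
  define cr where "cr = corr l ua u0 u1"
  have NKS: "N = K * S" proof -
    have "l = (l - s) + s" using assms(2) by simp
    then show ?thesis unfolding N_def K_def S_def by (metis power_add)
  qed
  have NH: "N = 2 * H" proof -
    have "l = Suc (l - 1)" using assms(1) by simp
    then show ?thesis unfolding N_def H_def by (metis power_Suc)
  qed
  have Spos: "S > 0" unfolding S_def by simp
  have r0: "0 \<le> u0" "u0 < N" unfolding u0_def urep_def N_def by auto
  have r1: "0 \<le> u1" "u1 < N" unfolding u1_def urep_def N_def by auto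
  have ra: "0 \<le> ua" "ua < N" unfolding ua_def urep_def N_def by auto
  have cg: "(u0 + u1) mod N = ua"
    using assms(3) unfolding u0_def u1_def ua_def urep_def N_def cong_def
    by (simp add: mod_add_eq)
  have k: "u0 + u1 = ua \<or> u0 + u1 = ua + N"
  proof (cases "u0 + u1 < N")
    case True then show ?thesis using cg r0 r1 by simp
  next
    case False
    have eq: "u0 + u1 = (u0 + u1 - N) + N" by simp
    have "(u0 + u1) mod N = (u0 + u1 - N) mod N"
      by (subst eq, rule mod_add_self2)
    also have "\<dots> = u0 + u1 - N"
      using False r0 r1 by (intro mod_pos_pos_trivial) auto
    finally have "(u0 + u1) mod N = u0 + u1 - N" .
    then show ?thesis using cg by simp
  qed
  have crv: "cr = (if ua \<ge> H \<and> u0 < H \<and> u1 < H then -1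
      else if ua < H \<and> u0 \<ge> H \<and> u1 \<ge> H then 1 else 0)"
    unfolding cr_def corr_def H_def by simp
  have vsum: "(u0 - b0 * N) + (u1 - b1 * N) = (ua - ba * N) - cr * N"
    using k r0 r1 ra NH unfolding crv b0_def b1_def ba_def by auto
  have e0: "(u0 - b0 * N) div S = a01 - b0 * K"
  proof -
    have "u0 - b0 * N = (a01 - b0 * K) * S + a00"
      using assms(4) NKS unfolding u0_def S_def by (simp add: algebra_simps)
    then show ?thesis using assms(5,6) Spos unfolding S_def by simp
  qed
  have e1: "(u1 - b1 * N) div S = a11 - b1 * K"
  proof -
    have "u1 - b1 * N = (a11 - b1 * K) * S + a10"
      using assms(7) NKS unfolding u1_def S_def by (simp add: algebra_simps)
    then show ?thesis using assms(8,9) Spos unfolding S_def by simp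
  qed
  have ea: "(ua - ba * N) div S = (a01 - b0 * K) + (a11 - b1 * K) + cr * K + c"
  proof -
    have "ua - ba * N = (a01 - b0 * K + (a11 - b1 * K) + cr * K) * S + (a00 + a10)"
      using vsum assms(4,7) NKS unfolding u0_def u1_def S_def
      by (simp add: algebra_simps)
    then have "(ua - ba * N) div S = (a01 - b0 * K + (a11 - b1 * K) + cr * K) + (a00 + a10) div S"
      using Spos by simp
    moreover have "(a00 + a10) div S = c"
    proof (cases "a00 + a10 \<ge> 2 ^ s")
      case True
      then have "(a00 + a10) div S = 1"
      proof -
        have ineq: "0 \<le> a00 + a10 - S" "a00 + a10 - S < S"
          using True assms(6,9) unfolding S_def by auto
        have "(a00 + a10) div S = ((a00 + a10 - S) + 1 * S) div S" by simp
        also have "\<dots> = 1 + (a00 + a10 - S) div S"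
          by (rule div_mult_self1) (use Spos in simp)
        also have "\<dots> = 1" using ineq by (simp add: div_pos_pos_trivial)
        finally show ?thesis .
      qed
      then show ?thesis using True unfolding c_def by simp
    next
      case False
      then show ?thesis using assms(5,8) unfolding c_def S_def by simp
    qed
    ultimately show ?thesis by simp
  qed
  have a0: "ashr l s x0 = (a01 - b0 * K) mod N"
  proof -
    have "ashr l s x0 = (u0 - b0 * N) div S mod N"
      unfolding ashr_def u0_def b0_def H_def N_def S_def by (simp add: if_distrib)
    then show ?thesis using e0 by simp
  qed
  have a1: "ashr l s x1 = (a11 - b1 * K) mod N"
  proof -
    have "ashr l s x1 = (u1 - b1 * N) div S mod N"
      unfolding ashr_def u1_def b1_def H_def N_def S_def by (simp add: if_distrib)
    then show ?thesis using e1 by simp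
  qed
  have aa: "ashr l s a = ((a01 - b0 * K) + (a11 - b1 * K) + cr * K + c) mod N"
  proof -
    have "ashr l s a = (ua - ba * N) div S mod N"
      unfolding ashr_def ua_def ba_def H_def N_def S_def by (simp add: if_distrib)
    then show ?thesis using ea by simp
  qed
  have m1: "((a01 - b0 * K) mod N + (a11 - b1 * K) mod N) mod N = ((a01 - b0 * K) + (a11 - b1 * K)) mod N"
    by (rule mod_add_eq)
  have m2: "((a01 - b0 * K) mod N + (a11 - b1 * K) mod N + (cr * K + c)) mod N
       = ((a01 - b0 * K) + (a11 - b1 * K) + (cr * K + c)) mod N"
    using m1 by (metis mod_add_left_eq)
  show ?thesis
    unfolding a0 a1 aa cong_def
    unfolding N_def[symmetric] K_def[symmetric] c_def[symmetric]
    unfolding ua_def[symmetric] u0_def[symmetric] u1_def[symmetric]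
    unfolding cr_def[symmetric]
    using m2 by (simp only: add.assoc mod_mod_trivial)
qed

end
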